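(* For any integers $k_1<k_2$, the function $\cos:(k_1\pi+\pi/2,\,k_2\pi+\pi/2)\to\mathbb{R}$ is amenable.
   Context: Relative distance on $\mathbb{R}$: $\mathrm{dist}(x,y)=0$ if $x=y=0$, $\mathrm{dist}(x,y)=|\log(y/x)|$ if $xy>0$, and $\mathrm{dist}(x,y)=\infty$ otherwise. For a real analytic function $f$ on an open set $\Omega\subseteq\mathbb{R}$, not identically zero, the condition number is $\kappa(f,x)=0$ if $x=0$, $\kappa(f,x)=\infty$ if $x\neq0$ and $f(x)=0$, and $\kappa(f,x)=|x|\,|f'(x)|/|f(x)|$ otherwise; $\mu(f,x)=1+\kappa(f,x)$. $f:\Omega\to\mathbb{R}$ is amenable if there is $C>0$ such that for every $x\in\Omega$ with $\kappa(f,x)<\infty$, the set $B_x=\{y\in\mathbb{R}:\mathrm{dist}(y,x)<1/(C\mu(f,x))\}$ is contained in $\Omega$ and $\mu(f,y)\leq C\mu(f,x)$ for all $y\in B_x$. *)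

theory Defs
  imports "HOL-Analysis.Analysis"
begin

definition reldist :: "real \<Rightarrow> real \<Rightarrow> ereal" where
  "reldist x y = (if x = 0 \<and> y = 0 then 0
                  else if x * y > 0 then ereal \<bar>ln (y / x)\<bar>
                  else \<infinity>)"

definition kappa :: "(real \<Rightarrow> real) \<Rightarrow> real \<Rightarrow> ereal" where
  "kappa f x = (if x = 0 then 0
                else if f x = 0 then \<infinity>
                else ereal (\<bar>x\<bar> * \<bar>deriv f x\<bar> / \<bar>f x\<bar>))"

definition mu :: "(real \<Rightarrow> real) \<Rightarrow> real \<Rightarrow> ereal" where
  "mu f x = 1 + kappa f x"

definition amenable :: "(real \<Rightarrow> real) \<Rightarrow> real set \<Rightarrow> bool" where
  "amenable f \<Omega> \<longleftrightarrow> (\<exists>C::real. C > 0 \<and>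
     (\<forall>x\<in>\<Omega>. kappa f x < \<infinity> \<longrightarrow>
        {y. reldist y x < 1 / (ereal C * mu f x)} \<subseteq> \<Omega> \<and>
        (\<forall>y. reldist y x < 1 / (ereal C * mu f x) \<longrightarrow> mu f y \<le> ereal C * mu f x)))"

end

theory Submission
  imports Defs
begin

lemma cos_lip: "\<bar>cos (w::real) - cos z\<bar> \<le> \<bar>w - z\<bar>"
proof -
  have "\<bar>cos w - cos z\<bar> = 2 * \<bar>sin ((w + z) / 2)\<bar> * \<bar>sin ((z - w) / 2)\<bar>"
    by (simp add: cos_diff_cos abs_mult)
  also have "\<dots> \<le> 2 * 1 * \<bar>(z - w) / 2\<bar>"
    by (intro mult_mono abs_sin_x_le_abs_x) auto
  finally show ?thesis by simp
qed

lemma deriv_cos_real: "deriv cos (x::real) = - sin x"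
  by (rule DERIV_imp_deriv) (rule DERIV_cos)

lemma mu_cos: "x = 0 \<or> cos x \<noteq> 0 \<Longrightarrow> mu cos x = ereal (1 + \<bar>x\<bar> * \<bar>sin x\<bar> / \<bar>cos x\<bar>)"
  by (auto simp: mu_def kappa_def deriv_cos_real one_ereal_def)

lemma core:
  fixes a b x y M :: real
  assumes ab: "a < x" "x < b" and ca: "cos a = 0" and cb: "cos b = 0"
    and M: "M \<ge> 1" "\<bar>x\<bar> \<le> M"
    and cx: "cos x \<noteq> 0"
    and m_def: "m = 1 + \<bar>x\<bar> * \<bar>sin x\<bar> / \<bar>cos x\<bar>"
    and C_def: "C = 1 + 12 * M"
    and yx: "y * x > 0" and ln: "\<bar>ln (x / y)\<bar> < 1 / (C * m)"
  shows "a < y \<and> y < b \<and> cos y \<noteq> 0 \<and> 1 + \<bar>y\<bar> * \<bar>sin y\<bar> / \<bar>cos y\<bar> \<le> C * m"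
proof -
  have cpos: "\<bar>cos x\<bar> > 0" using cx by simp
  have m1: "m \<ge> 1" using m_def cpos by simp
  have key1: "\<bar>x\<bar> / \<bar>cos x\<bar> \<le> 2 * M * m"
  proof (cases "\<bar>cos x\<bar> \<ge> 1/2")
    case True
    have "\<bar>x\<bar> / \<bar>cos x\<bar> \<le> \<bar>x\<bar> / (1/2)"
      using True by (intro divide_left_mono) auto
    also have "\<dots> \<le> 2 * M" using M by simp
    also have "\<dots> \<le> 2 * M * m" using m1 M by simp
    finally show ?thesis .
  next
    case False
    have "\<bar>sin x\<bar> \<ge> 1/2"
    proof (rule ccontr)
      assume "\<not> ?thesis"
      hence "\<bar>sin x\<bar>^2 < (1/2)^2" by (intro power_strict_mono) auto
      hence "(sin x)^2 < 1/4" by (simp add: power2_eq_square)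
      moreover have "\<bar>cos x\<bar>^2 < (1/2)^2" using False by (intro power_strict_mono) auto
      hence "(cos x)^2 < 1/4" by (simp add: power2_eq_square)
      ultimately show False using sin_cos_squared_add[of x] by linarith
    qed
    hence "\<bar>x\<bar> * 1 \<le> \<bar>x\<bar> * (2 * \<bar>sin x\<bar>)" by (intro mult_left_mono) auto
    hence "\<bar>x\<bar> \<le> 2 * (\<bar>x\<bar> * \<bar>sin x\<bar>)" by simp
    hence "\<bar>x\<bar> / \<bar>cos x\<bar> \<le> 2 * (\<bar>x\<bar> * \<bar>sin x\<bar> / \<bar>cos x\<bar>)"
      using cpos by (simp add: divide_right_mono)
    also have "\<dots> \<le> 2 * m" using m_def by simp
    also have "\<dots> \<le> 2 * M * m" using M m1 by simp
    finally show ?thesis .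
  qed
  define r where "r = 1 / (C * m)"
  have C1: "C \<ge> 1" using C_def M by simp
  have Cm: "1 * 1 \<le> C * m" using C1 m1 by (intro mult_mono) auto
  hence Cm: "C * m \<ge> 1" by simp
  have r01: "0 < r" "r \<le> 1" using Cm by (auto simp: r_def)
  define q where "q = y / x"
  have xne: "x \<noteq> 0" and yne: "y \<noteq> 0" using yx by auto
  have qpos: "q > 0" using yx unfolding q_def by (auto simp: zero_less_divide_iff zero_less_mult_iff)
  have lnq: "\<bar>ln q\<bar> < r"
  proof -
    have "x / y = inverse q" by (simp add: q_def)
    hence "ln (x / y) = - ln q" using qpos by (simp add: ln_inverse)
    thus ?thesis using ln r_def by simp
  qed
  have q1: "\<bar>q - 1\<bar> \<le> 3 * r \<and> q \<le> 3"
  proof (cases "q \<ge> 1")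
    case True
    have "ln q < 1" using lnq r01 by simp
    hence q3: "q < exp 1" using qpos by (metis exp_ln exp_less_cancel_iff)
    have "exp (1::real) \<le> 3" using exp_le by simp
    with q3 have q3': "q \<le> 3" by simp
    have "ln (1/q) \<le> 1/q - 1" using qpos by (intro ln_le_minus_one) simp
    hence "- ln q \<le> (1 - q) / q" using qpos by (simp add: ln_div diff_divide_distrib)
    hence "q - 1 \<le> q * ln q" using qpos by (simp add: field_simps)
    also have "\<dots> \<le> 3 * r" using q3' lnq qpos True
      by (intro mult_mono) auto
    finally show ?thesis using True q3' by simp
  next
    case False
    have "ln q \<le> q - 1" using qpos by (rule ln_le_minus_one)
    thus ?thesis using False lnq r01 by auto
  qed
  have yq: "y = x * q" using xne unfolding q_def by simp
  have dyx: "\<bar>y - x\<bar> \<le> 3 * \<bar>x\<bar> * r"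
  proof -
    have "\<bar>y - x\<bar> = \<bar>x\<bar> * \<bar>q - 1\<bar>" by (simp add: yq abs_mult[symmetric] algebra_simps)
    also have "\<dots> \<le> \<bar>x\<bar> * (3 * r)" using q1 by (intro mult_left_mono) auto
    finally show ?thesis by simp
  qed
  have small: "3 * \<bar>x\<bar> * r \<le> \<bar>cos x\<bar> / 2"
  proof -
    have "6 * (\<bar>x\<bar> / \<bar>cos x\<bar>) \<le> 12 * M * m" using key1 by simp
    also have "\<dots> \<le> C * m" using C_def m1 by (simp add: algebra_simps)
    finally have "6 * \<bar>x\<bar> \<le> C * m * \<bar>cos x\<bar>" using cpos by (simp add: field_simps)
    thus ?thesis unfolding r_def using Cm cpos by (simp add: field_simps)
  qed
  have dyx2: "\<bar>y - x\<bar> \<le> \<bar>cos x\<bar> / 2" using dyx small by simp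
  have cy: "\<bar>cos y\<bar> \<ge> \<bar>cos x\<bar> / 2" using cos_lip[of y x] dyx2 by linarith
  have xa: "\<bar>cos x\<bar> \<le> x - a" using cos_lip[of x a] ca ab by simp
  have xb: "\<bar>cos x\<bar> \<le> b - x" using cos_lip[of x b] cb ab by simp
  have ya: "a < y" using xa dyx2 cpos by linarith
  have yb: "y < b" using xb dyx2 cpos by linarith
  have cyne: "cos y \<noteq> 0" using cy cpos by auto
  have ybound: "\<bar>y\<bar> \<le> 3 * \<bar>x\<bar>"
  proof -
    have "\<bar>y\<bar> = q * \<bar>x\<bar>" using yq qpos by (simp add: abs_mult)
    also have "\<dots> \<le> 3 * \<bar>x\<bar>" using q1 by (intro mult_right_mono) auto
    finally show ?thesis .
  qed
  have "\<bar>y\<bar> * \<bar>sin y\<bar> / \<bar>cos y\<bar> \<le> \<bar>y\<bar> / \<bar>cos y\<bar>"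
    using cyne by (simp add: divide_right_mono mult_left_le)
  also have "\<dots> \<le> (3 * \<bar>x\<bar>) / (\<bar>cos x\<bar> / 2)"
    using cy cpos ybound by (intro frac_le) auto
  also have "\<dots> = 6 * (\<bar>x\<bar> / \<bar>cos x\<bar>)" by simp
  also have "\<dots> \<le> 12 * M * m" using key1 by simp
  finally have "1 + \<bar>y\<bar> * \<bar>sin y\<bar> / \<bar>cos y\<bar> \<le> 1 + 12 * M * m" by simp
  also have "\<dots> \<le> C * m" using C_def m1 by (simp add: algebra_simps)
  finally show ?thesis using ya yb cyne by simp
qed

lemma reldist_lt1: "reldist y x < ereal r \<Longrightarrow> x \<noteq> 0 \<Longrightarrow> y * x > 0 \<and> \<bar>ln (x / y)\<bar> < r"
  by (auto simp: reldist_def split: if_splits)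

lemma reldist_lt0: "reldist y 0 < ereal r \<Longrightarrow> y = 0"
  by (auto simp: reldist_def split: if_splits)

theorem mainTheorem10:
  fixes k1 k2 :: int
  assumes "k1 < k2"
  shows "amenable cos {real_of_int k1 * pi + pi / 2 <..< real_of_int k2 * pi + pi / 2}"
proof -
  define a where "a = real_of_int k1 * pi + pi / 2"
  define b where "b = real_of_int k2 * pi + pi / 2"
  define M where "M = max 1 (max \<bar>a\<bar> \<bar>b\<bar>)"
  define C where "C = 1 + 12 * M"
  have ca: "cos a = 0" unfolding a_def using cos_zero_iff_int2 by blast
  have cb: "cos b = 0" unfolding b_def using cos_zero_iff_int2 by blast
  have M1: "M \<ge> 1" by (simp add: M_def)
  have Cpos: "C > 0" using M1 by (simp add: C_def)
  have "\<forall>x\<in>{a<..<b}. kappa cos x < \<infinity> \<longrightarrow>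
        {y. reldist y x < 1 / (ereal C * mu cos x)} \<subseteq> {a<..<b} \<and>
        (\<forall>y. reldist y x < 1 / (ereal C * mu cos x) \<longrightarrow> mu cos y \<le> ereal C * mu cos x)"
  proof (intro ballI impI)
    fix x assume xin: "x \<in> {a<..<b}" and kx: "kappa cos x < \<infinity>"
    have xM: "\<bar>x\<bar> \<le> M" using xin by (auto simp: M_def)
    show "{y. reldist y x < 1 / (ereal C * mu cos x)} \<subseteq> {a<..<b} \<and>
        (\<forall>y. reldist y x < 1 / (ereal C * mu cos x) \<longrightarrow> mu cos y \<le> ereal C * mu cos x)"
    proof (cases "x = 0")
      case True
      have mu0: "mu cos x = ereal 1" using mu_cos[of x] True by simp
      have e: "1 / (ereal C * mu cos x) = ereal (1 / C)" using mu0 Cpos by (simp add: one_ereal_def)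
      have yy: "y = x" if "reldist y x < 1 / (ereal C * mu cos x)" for y
        using that reldist_lt0[of y "1/C"] True e by simp
      have "mu cos x \<le> ereal C * mu cos x" using mu0 True Cpos M1 by (simp add: C_def)
      hence A: "\<forall>y. reldist y x < 1 / (ereal C * mu cos x) \<longrightarrow> mu cos y \<le> ereal C * mu cos x"
        using yy by blast
      have B: "{y. reldist y x < 1 / (ereal C * mu cos x)} \<subseteq> {a<..<b}"
        using yy xin by blast
      show ?thesis using A B by blast
    next
      case False
      have cx: "cos x \<noteq> 0" using kx False by (auto simp: kappa_def split: if_splits)
      define m where "m = 1 + \<bar>x\<bar> * \<bar>sin x\<bar> / \<bar>cos x\<bar>"
      have m1: "m \<ge> 1" by (simp add: m_def)
      have mux: "mu cos x = ereal m" using mu_cos[of x] cx by (simp add: m_def)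
      have e: "1 / (ereal C * mu cos x) = ereal (1 / (C * m))" using mux Cpos m1 by (simp add: one_ereal_def)
      have P: "a < y \<and> y < b \<and> cos y \<noteq> 0 \<and> 1 + \<bar>y\<bar> * \<bar>sin y\<bar> / \<bar>cos y\<bar> \<le> C * m"
        if "reldist y x < 1 / (ereal C * mu cos x)" for y
      proof -
        have "y * x > 0 \<and> \<bar>ln (x / y)\<bar> < 1 / (C * m)"
          using reldist_lt1[of y x "1 / (C * m)"] that e False by simp
        thus ?thesis using core[of a x b M m C y] xin ca cb M1 xM cx m_def C_def by auto
      qed
      have Q: "mu cos y \<le> ereal C * mu cos x" if "reldist y x < 1 / (ereal C * mu cos x)" for y
      proof -
        have "mu cos y = ereal (1 + \<bar>y\<bar> * \<bar>sin y\<bar> / \<bar>cos y\<bar>)" using P[OF that] mu_cos[of y] by simp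
        also have "\<dots> \<le> ereal (C * m)" using P[OF that] by simp
        finally show ?thesis using mux by simp
      qed
      show ?thesis using P Q by auto
    qed
  qed
  thus ?thesis unfolding amenable_def a_def b_def using Cpos by blast
qed

end
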